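(* Consider the Gaussian crossed effect model with $K=2$, $L=1$, $I_1=I_2=I$, and the circulant design $n^{(1,2)}_{ij}=1$ if the cyclic distance between $i$ and $j$ modulo $I$ is at most $d/2$ and $n^{(1,2)}_{ij}=0$ otherwise, where $d$ is a positive even integer with $d+1\le I$ (so levels are balanced with $\bar n=d+1$ and $N=I(d+1)$). Using the ordering $(a^{(1)}_1,\dots,a^{(1)}_I,a^{(2)}_1,\dots,a^{(2)}_I,a^{(0)})$, the ratio $n_{\boldsymbol{L}}/n_{\boldsymbol{Q}}$ is bounded by a constant (e.g. $3$) uniformly in $N$ and $d$, and $\mathrm{Cost(SLA)}=\Theta(N\bar n)$ with constants independent of $N$ and $d$.
   Context: Model: $y_j\sim\mathcal{N}(a^{(0)}+a^{(1)}_{i_1[j]}+a^{(2)}_{i_2[j]},\tau^{-1})$, priors $a^{(k)}_i\sim\mathcal{N}(0,\tau_k^{-1})$, $a^{(0)}\sim\mathcal{N}(\mu_{pr},T_{pr}^{-1})$; $n^{(1,2)}_{ij}$ is the number of observations with factor-1 level $i$ and factor-2 level $j$; $\bar n=KN/p$ with $p=I_1+I_2$. The posterior precision $\boldsymbol{Q}$ has entries $\boldsymbol{Q}[a^{(0)},a^{(0)}]=T_{pr}+N\tau$, $\boldsymbol{Q}[a^{(0)},a^{(k)}_i]=n^{(k)}_i\tau$, $\boldsymbol{Q}[a^{(k)}_i,a^{(k)}_i]=\tau_k+n^{(k)}_i\tau$, $\boldsymbol{Q}[a^{(1)}_i,a^{(2)}_j]=n^{(1,2)}_{ij}\tau$,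 zero otherwise. $G_{\boldsymbol{Q}}$: graph with edge iff off-diagonal entry nonzero. For the given ordering $\theta_1,\dots,\theta_M$, $n_{\boldsymbol{L},m}$ counts $j\ge m$ with $j=m$ or a path from $\theta_m$ to $\theta_j$ in $G_{\boldsymbol{Q}}$ with all intermediate vertices among $\theta_1,\dots,\theta_{m-1}$; $n_{\boldsymbol{L}}=\sum_m n_{\boldsymbol{L},m}$; $n_{\boldsymbol{Q}}$ is the number of nonzero entries in the lower-triangular part (including diagonal) of $\boldsymbol{Q}$. $\mathrm{Cost(SLA)}$ is the flop count of the column Cholesky recursion $L_{mm}^2=Q_{mm}-\sum_{\ell<m}L_{m\ell}^2$, $L_{jm}=(Q_{jm}-\sum_{\ell<m}L_{j\ell}L_{m\ell})/L_{mm}$, restricted to the potential nonzero pattern; it satisfies $\mathrm{Cost(SLA)}=\Theta(\sum_m n_{\boldsymbol{L},m}^2)$. $A=\Theta(B)$ means $c_1\le A/B\le c_2$ for constants $c_1,c_2>0$. *)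

theory Defs
  imports Complex_Main
begin

datatype param = A0 | A1 nat | A2 nat

definition cdist :: "nat \<Rightarrow> nat \<Rightarrow> nat \<Rightarrow> nat" where
  "cdist I i j = nat (min ((int i - int j) mod int I) ((int j - int i) mod int I))"

text \<open>Circulant design: levels are 1..I for both factors.\<close>
definition n12 :: "nat \<Rightarrow> nat \<Rightarrow> nat \<Rightarrow> nat \<Rightarrow> nat" where
  "n12 I d i j = (if cdist I i j \<le> d div 2 then 1 else 0)"

definition n1 :: "nat \<Rightarrow> nat \<Rightarrow> nat \<Rightarrow> nat" where
  "n1 I d i = (\<Sum>j\<in>{1..I}. n12 I d i j)"

definition n2 :: "nat \<Rightarrow> nat \<Rightarrow> nat \<Rightarrow> nat" where
  "n2 I d j = (\<Sum>i\<in>{1..I}. n12 I d i j)"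

definition Nobs :: "nat \<Rightarrow> nat \<Rightarrow> nat" where
  "Nobs I d = (\<Sum>i\<in>{1..I}. \<Sum>j\<in>{1..I}. n12 I d i j)"

text \<open>nbar = K N / p with K = 2 and p = I_1 + I_2 = 2 I.\<close>
definition nbar :: "nat \<Rightarrow> nat \<Rightarrow> real" where
  "nbar I d = real (2 * Nobs I d) / real (2 * I)"

text \<open>Posterior precision matrix Q (tau: noise precision, tau1 tau2: prior
  precisions of the two factors, Tpr: prior precision of the intercept).\<close>
fun Qm :: "real \<Rightarrow> real \<Rightarrow> real \<Rightarrow> real \<Rightarrow> nat \<Rightarrow> nat \<Rightarrow> param \<Rightarrow> param \<Rightarrow> real" where
  "Qm tau tau1 tau2 Tpr I d A0 A0 = Tpr + real (Nobs I d) * tau"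
| "Qm tau tau1 tau2 Tpr I d A0 (A1 i) = real (n1 I d i) * tau"
| "Qm tau tau1 tau2 Tpr I d (A1 i) A0 = real (n1 I d i) * tau"
| "Qm tau tau1 tau2 Tpr I d A0 (A2 j) = real (n2 I d j) * tau"
| "Qm tau tau1 tau2 Tpr I d (A2 j) A0 = real (n2 I d j) * tau"
| "Qm tau tau1 tau2 Tpr I d (A1 i) (A1 i') =
     (if i = i' then tau1 + real (n1 I d i) * tau else 0)"
| "Qm tau tau1 tau2 Tpr I d (A2 j) (A2 j') =
     (if j = j' then tau2 + real (n2 I d j) * tau else 0)"
| "Qm tau tau1 tau2 Tpr I d (A1 i) (A2 j) = real (n12 I d i j) * tau"
| "Qm tau tau1 tau2 Tpr I d (A2 j) (A1 i) = real (n12 I d i j) * tau"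

definition theta :: "nat \<Rightarrow> nat \<Rightarrow> param" where
  "theta I m = (if m \<le> I then A1 m else if m \<le> 2 * I then A2 (m - I) else A0)"

definition Msize :: "nat \<Rightarrow> nat" where
  "Msize I = 2 * I + 1"

definition Qord :: "real \<Rightarrow> real \<Rightarrow> real \<Rightarrow> real \<Rightarrow> nat \<Rightarrow> nat \<Rightarrow> nat \<Rightarrow> nat \<Rightarrow> real" where
  "Qord tau tau1 tau2 Tpr I d m j = Qm tau tau1 tau2 Tpr I d (theta I m) (theta I j)"

definition adjQ :: "real \<Rightarrow> real \<Rightarrow> real \<Rightarrow> real \<Rightarrow> nat \<Rightarrow> nat \<Rightarrow> nat \<Rightarrow> nat \<Rightarrow> bool" where
  "adjQ tau tau1 tau2 Tpr I d m j \<longleftrightarrow>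
     m \<in> {1..Msize I} \<and> j \<in> {1..Msize I} \<and> m \<noteq> j \<and> Qord tau tau1 tau2 Tpr I d m j \<noteq> 0"

definition path_via :: "(nat \<Rightarrow> nat \<Rightarrow> bool) \<Rightarrow> nat set \<Rightarrow> nat \<Rightarrow> nat \<Rightarrow> bool" where
  "path_via adj S x y \<longleftrightarrow>
     (\<exists>vs. length vs \<ge> 2 \<and> hd vs = x \<and> last vs = y \<and>
           (\<forall>i < length vs - 1. adj (vs ! i) (vs ! Suc i)) \<and>
           set (butlast (tl vs)) \<subseteq> S)"

text \<open>Potential nonzero pattern of L: entry (j, m) with j \<ge> m.\<close>
definition Lpat :: "real \<Rightarrow> real \<Rightarrow> real \<Rightarrow> real \<Rightarrow> nat \<Rightarrow> nat \<Rightarrow> nat \<Rightarrow> nat \<Rightarrow> bool" where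
  "Lpat tau tau1 tau2 Tpr I d j m \<longleftrightarrow>
     m \<in> {1..Msize I} \<and> j \<in> {m..Msize I} \<and>
     (j = m \<or> path_via (adjQ tau tau1 tau2 Tpr I d) {1..<m} m j)"

definition nLm :: "real \<Rightarrow> real \<Rightarrow> real \<Rightarrow> real \<Rightarrow> nat \<Rightarrow> nat \<Rightarrow> nat \<Rightarrow> nat" where
  "nLm tau tau1 tau2 Tpr I d m = card {j \<in> {m..Msize I}. Lpat tau tau1 tau2 Tpr I d j m}"

definition nL :: "real \<Rightarrow> real \<Rightarrow> real \<Rightarrow> real \<Rightarrow> nat \<Rightarrow> nat \<Rightarrow> nat" where
  "nL tau tau1 tau2 Tpr I d = (\<Sum>m\<in>{1..Msize I}. nLm tau tau1 tau2 Tpr I d m)"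

definition nQ :: "real \<Rightarrow> real \<Rightarrow> real \<Rightarrow> real \<Rightarrow> nat \<Rightarrow> nat \<Rightarrow> nat" where
  "nQ tau tau1 tau2 Tpr I d =
     card {(j, m). m \<in> {1..Msize I} \<and> j \<in> {m..Msize I} \<and> Qord tau tau1 tau2 Tpr I d j m \<noteq> 0}"

text \<open>Flop count of the column Cholesky recursion restricted to the potential
  nonzero pattern: computing L_jm (j \<ge> m, in the pattern) costs one
  multiplication and one subtraction for every l < m with L_jl and L_ml in the
  pattern, plus one final square root (j = m) or division (j > m).\<close>
definition CostSLA :: "real \<Rightarrow> real \<Rightarrow> real \<Rightarrow> real \<Rightarrow> nat \<Rightarrow> nat \<Rightarrow> nat" where
  "CostSLA tau tau1 tau2 Tpr I d =
     (\<Sum>m\<in>{1..Msize I}. \<Sum>j\<in>{j \<in> {m..Msize I}. Lpat tau tau1 tau2 Tpr I d j m}.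
        2 * card {l \<in> {1..<m}. Lpat tau tau1 tau2 Tpr I d j l \<and> Lpat tau tau1 tau2 Tpr I d m l} + 1)"

end

theory Submission
  imports Defs
begin


lemma cdist_le_iff:
  assumes "0 < I"
  shows "cdist I i j \<le> r \<longleftrightarrow> (\<exists>q::int. \<bar>int i - int j - q * int I\<bar> \<le> int r)"
proof -
  define a where "a = (int i - int j) mod int I"
  define b where "b = (int j - int i) mod int I"
  have a0: "0 \<le> a" and b0: "0 \<le> b" using assms by (auto simp: a_def b_def)
  have c: "cdist I i j = nat (min a b)" by (simp add: cdist_def a_def b_def)
  show ?thesis
  proof
    assume "cdist I i j \<le> r"
    hence m: "min a b \<le> int r" using c a0 b0 by simp
    show "\<exists>q::int. \<bar>int i - int j - q * int I\<bar> \<le> int r"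
    proof (cases "a \<le> b")
      case True
      have "int i - int j - ((int i - int j) div int I) * int I = a"
        unfolding a_def by (metis add_diff_cancel_left' div_mult_mod_eq)
      thus ?thesis using True m a0 by (intro exI[of _ "(int i - int j) div int I"]) simp
    next
      case False
      have "int j - int i - ((int j - int i) div int I) * int I = b"
        unfolding b_def by (metis add_diff_cancel_left' div_mult_mod_eq)
      hence "int i - int j - (- ((int j - int i) div int I)) * int I = - b" by (simp add: algebra_simps)
      thus ?thesis using False m b0 by (intro exI[of _ "- ((int j - int i) div int I)"]) simp
    qed
  next
    assume "\<exists>q::int. \<bar>int i - int j - q * int I\<bar> \<le> int r"
    then obtain q where q: "\<bar>int i - int j - q * int I\<bar> \<le> int r" by blast
    define y where "y = int i - int j - q * int I"
    have ya: "a = y mod int I" unfolding a_def y_def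
      by (metis diff_add_cancel mod_mult_self1)
    have yb: "b = (- y) mod int I" unfolding b_def y_def
      by (metis (no_types, opaque_lifting) add.commute diff_add_cancel minus_diff_eq mod_mult_self1 mult_minus_left uminus_add_conv_diff)
    have "min a b \<le> int r"
    proof (cases "0 \<le> y")
      case True
      hence "a \<le> y" using ya zmod_le_nonneg_dividend by simp
      thus ?thesis using q True y_def by simp
    next
      case False
      hence "b \<le> - y" using yb zmod_le_nonneg_dividend[of "-y"] by simp
      thus ?thesis using q False y_def by simp
    qed
    thus "cdist I i j \<le> r" using c by simp
  qed
qed

lemma cdist_sym: "cdist I i j = cdist I j i"
  by (simp add: cdist_def min.commute)

lemma n12_sym: "n12 I d i j = n12 I d j i"
  by (simp add: n12_def cdist_sym)

lemma n12_01: "n12 I d i j = 0 \<or> n12 I d i j = 1"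
  by (simp add: n12_def)

lemma n12_one_iff:
  assumes "0 < I"
  shows "n12 I d i j = 1 \<longleftrightarrow> (\<exists>q::int. \<bar>int i - int j - q * int I\<bar> \<le> int (d div 2))"
  using cdist_le_iff[OF assms] by (simp add: n12_def)



lemma deg_card:
  assumes I: "d + 1 \<le> I" and ev: "even d" and i: "i \<in> {1..I}"
  shows "card {j\<in>{1..I}. n12 I d i j = 1} = d + 1"
proof -
  define h where "h = d div 2"
  have dh: "d = 2 * h" using ev h_def by simp
  have I0: "0 < I" using I by simp
  define f where "f t = nat ((int i - 1 + t) mod int I) + 1" for t :: int
  have S: "{j\<in>{1..I}. n12 I d i j = 1} = {j\<in>{1..I}. \<exists>q::int. \<bar>int i - int j - q * int I\<bar> \<le> int h}"
    using n12_one_iff[OF I0] h_def by auto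
  have inj: "inj_on f {- int h..int h}"
  proof (rule inj_onI)
    fix s t assume s: "s \<in> {- int h..int h}" and t: "t \<in> {- int h..int h}" and e: "f s = f t"
    have "nat ((int i - 1 + s) mod int I) = nat ((int i - 1 + t) mod int I)"
      using e unfolding f_def by simp
    hence "(int i - 1 + s) mod int I = (int i - 1 + t) mod int I"
    proof -
      have "0 \<le> (int i - 1 + s) mod int I" "0 \<le> (int i - 1 + t) mod int I" using I0 by simp_all
      thus ?thesis using \<open>nat ((int i - 1 + s) mod int I) = nat ((int i - 1 + t) mod int I)\<close>
        using eq_nat_nat_iff[of "(int i - 1 + s) mod int I" "(int i - 1 + t) mod int I"] by blast
    qed
    hence "int I dvd (int i - 1 + s) - (int i - 1 + t)"
      by (simp add: mod_eq_dvd_iff)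
    hence dv: "int I dvd (s - t)" by simp
    have "\<bar>s - t\<bar> < int I" using s t I dh by auto
    thus "s = t" using dvd_imp_le_int[OF _ dv] by (cases "s - t = 0") auto
  qed
  have img: "f ` {- int h..int h} = {j\<in>{1..I}. \<exists>q::int. \<bar>int i - int j - q * int I\<bar> \<le> int h}"
  proof
    show "f ` {- int h..int h} \<subseteq> {j\<in>{1..I}. \<exists>q::int. \<bar>int i - int j - q * int I\<bar> \<le> int h}"
    proof
      fix x assume "x \<in> f ` {- int h..int h}"
      then obtain t where t: "t \<in> {- int h..int h}" and x: "x = f t" by blast
      define r where "r = (int i - 1 + t) mod int I"
      have r0: "0 \<le> r" "r < int I" using I0 r_def by auto
      have xr: "int x = r + 1" using x r0 unfolding f_def r_def by simp
      have "int i - 1 + t = ((int i - 1 + t) div int I) * int I + r"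
        unfolding r_def by simp
      hence "int i - int x - ((int i - 1 + t) div int I) * int I = - t" using xr by simp
      hence "\<bar>int i - int x - ((int i - 1 + t) div int I) * int I\<bar> \<le> int h" using t by auto
      moreover have "x \<in> {1..I}" using xr r0 by auto
      ultimately show "x \<in> {j\<in>{1..I}. \<exists>q::int. \<bar>int i - int j - q * int I\<bar> \<le> int h}" by blast
    qed
  next
    show "{j\<in>{1..I}. \<exists>q::int. \<bar>int i - int j - q * int I\<bar> \<le> int h} \<subseteq> f ` {- int h..int h}"
    proof
      fix j assume "j \<in> {j\<in>{1..I}. \<exists>q::int. \<bar>int i - int j - q * int I\<bar> \<le> int h}"
      then obtain q where j: "j \<in> {1..I}" and q: "\<bar>int i - int j - q * int I\<bar> \<le> int h" by blast
      define t where "t = int j - int i + q * int I"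
      have t1: "t \<in> {- int h..int h}" using q t_def by auto
      have "int i - 1 + t = int j - 1 + q * int I" by (simp add: t_def)
      hence "(int i - 1 + t) mod int I = (int j - 1 + q * int I) mod int I" by (rule arg_cong[where f="\<lambda>x. x mod int I"])
      also have "\<dots> = (int j - 1) mod int I" by (rule mod_mult_self1)
      also have "\<dots> = int j - 1" using j by (intro mod_pos_pos_trivial) auto
      finally have "f t = j" using j unfolding f_def by (simp add: nat_diff_distrib)
      thus "j \<in> f ` {- int h..int h}" using t1 by blast
    qed
  qed
  have "card {j\<in>{1..I}. n12 I d i j = 1} = card {- int h..int h}"
    using S img inj card_image by metis
  also have "\<dots> = d + 1" using dh by simp
  finally show ?thesis .
qed

lemma sum01_card:
  "finite A \<Longrightarrow> (\<Sum>j\<in>A. n12 I d i j) = card {j\<in>A. n12 I d i j = 1}"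
proof -
  assume fA: "finite A"
  have "(\<Sum>j\<in>A. n12 I d i j) = (\<Sum>j\<in>A. if n12 I d i j = 1 then 1 else 0)"
  proof (rule sum.cong[OF refl])
    fix x show "n12 I d i x = (if n12 I d i x = 1 then 1 else 0)" using n12_01[of I d i x] by auto
  qed
  also have "\<dots> = card {j\<in>A. n12 I d i j = 1}"
    using fA by (simp add: sum.If_cases Int_def)
  finally show ?thesis .
qed

lemma n1_val: "d + 1 \<le> I \<Longrightarrow> even d \<Longrightarrow> i \<in> {1..I} \<Longrightarrow> n1 I d i = d + 1"
  unfolding n1_def sum01_card[OF finite_atLeastAtMost] by (rule deg_card)

lemma n2_val: "d + 1 \<le> I \<Longrightarrow> even d \<Longrightarrow> i \<in> {1..I} \<Longrightarrow> n2 I d i = d + 1"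
  unfolding n2_def  by (subst n12_sym) (unfold sum01_card[OF finite_atLeastAtMost], rule deg_card)

lemma Nobs_val: "d + 1 \<le> I \<Longrightarrow> even d \<Longrightarrow> Nobs I d = I * (d + 1)"
  unfolding Nobs_def using n1_val[unfolded n1_def] by simp

lemma nbar_val: "d + 1 \<le> I \<Longrightarrow> even d \<Longrightarrow> nbar I d = real d + 1"
  unfolding nbar_def using Nobs_val by (simp add: field_simps)



lemma path_via_D:
  assumes "path_via adj S x y"
  shows "\<exists>n f. 0 < n \<and> f 0 = x \<and> f n = y \<and> (\<forall>i<n. adj (f i) (f (Suc i))) \<and>
               (\<forall>i. 0 < i \<and> i < n \<longrightarrow> f i \<in> S)"
proof -
  obtain vs where l: "length vs \<ge> 2" and h: "hd vs = x" and la: "last vs = y"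
    and a: "\<forall>i < length vs - 1. adj (vs ! i) (vs ! Suc i)" and s: "set (butlast (tl vs)) \<subseteq> S"
    using assms unfolding path_via_def by blast
  have ne: "vs \<noteq> []" using l by auto
  have "\<forall>i. 0 < i \<and> i < length vs - 1 \<longrightarrow> vs ! i \<in> S"
  proof (intro allI impI)
    fix i assume i: "0 < i \<and> i < length vs - 1"
    have "butlast (tl vs) ! (i - 1) = tl vs ! (i - 1)" using i by (intro nth_butlast) auto
    also have "\<dots> = vs ! i" using i ne by (subst nth_tl) auto
    finally have "vs ! i = butlast (tl vs) ! (i - 1)" by simp
    moreover have "i - 1 < length (butlast (tl vs))" using i by auto
    ultimately show "vs ! i \<in> S" using s nth_mem by (metis subsetD)
  qed
  moreover have "vs ! 0 = x" using h ne by (simp add: hd_conv_nth)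
  moreover have "vs ! (length vs - 1) = y" using la ne by (simp add: last_conv_nth)
  ultimately show ?thesis using l a by (intro exI[of _ "length vs - 1"] exI[of _ "(!) vs"]) auto
qed

lemma path2: "adj x y \<Longrightarrow> path_via adj S x y"
  unfolding path_via_def by (intro exI[of _ "[x,y]"]) auto

lemma path3: "adj x z \<Longrightarrow> adj z y \<Longrightarrow> z \<in> S \<Longrightarrow> path_via adj S x y"
  unfolding path_via_def
  by (intro exI[of _ "[x,z,y]"]) (auto simp: less_Suc_eq nth_Cons split: nat.splits)

lemma theta1: "m \<le> I \<Longrightarrow> theta I m = A1 m" by (simp add: theta_def)
lemma theta2: "I < m \<Longrightarrow> m \<le> 2*I \<Longrightarrow> theta I m = A2 (m - I)" by (simp add: theta_def)
lemma thetaM: "theta I (2*I+1) = A0" by (simp add: theta_def)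

lemma card_pairs:
  assumes "finite A" "\<forall>m\<in>A. finite (B m)"
  shows "card {(j,m). m \<in> A \<and> j \<in> B m \<and> P j m} = (\<Sum>m\<in>A. card {j\<in>B m. P j m})"
proof -
  have "{(j,m). m \<in> A \<and> j \<in> B m \<and> P j m} = (\<lambda>(m,j). (j,m)) ` (SIGMA m:A. {j\<in>B m. P j m})"
    by auto
  moreover have "inj_on (\<lambda>(m,j). (j,m)) (SIGMA m:A. {j\<in>B m. P j m})"
    by (auto simp: inj_on_def)
  ultimately have "card {(j,m). m \<in> A \<and> j \<in> B m \<and> P j m} = card (SIGMA m:A. {j\<in>B m. P j m})"
    by (simp add: card_image)
  also have "\<dots> = (\<Sum>m\<in>A. card {j\<in>B m. P j m})" using assms by simp
  finally show ?thesis .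
qed

lemma sum_split3:
  fixes f :: "nat \<Rightarrow> 'a::comm_monoid_add"
  shows "sum f {1..2*I+1} = sum f {1..I} + sum (\<lambda>k. f (I+k)) {1..I} + f (2*I+1)"
proof -
  have "sum f {1..I + (I+1)} = sum f {1..I} + sum f {I+1..I+(I+1)}"
    by (rule sum.ub_add_nat) simp
  moreover have "sum f {I+1..I+(I+1)} = sum f {I+1..I+I} + f (2*I+1)"
    by (simp add: sum.cl_ivl_Suc mult_2)
  moreover have "sum f {I+1..I+I} = sum (\<lambda>k. f (I+k)) {1..I}"
    using sum.shift_bounds_cl_nat_ivl[of f 1 I I] by (simp add: add.commute)
  ultimately show ?thesis by (simp add: mult_2 add.assoc)
qed

lemma geo:
  assumes I0: "0 < I" and dI: "d < I" and ev: "even d"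
    and j': "1 \<le> j'" "j' \<le> k" and k': "k < k'" "k' \<le> I"
    and a: "n12 I d p j' = 1" and b: "n12 I d p k' = 1"
  shows "k' \<le> k + d \<or> I + 1 - d \<le> k'"
proof -
  define h where "h = d div 2"
  have dh: "int d = 2 * int h" using ev h_def by auto
  obtain q1 where q1: "\<bar>int p - int j' - q1 * int I\<bar> \<le> int h" using a n12_one_iff[OF I0] h_def by blast
  obtain q2 where q2: "\<bar>int p - int k' - q2 * int I\<bar> \<le> int h" using b n12_one_iff[OF I0] h_def by blast
  define q where "q = q1 - q2"
  have e: "int k' - int j' - q * int I = (int p - int j' - q1 * int I) - (int p - int k' - q2 * int I)"
    by (simp add: q_def algebra_simps)
  have bd: "\<bar>int k' - int j' - q * int I\<bar> \<le> int d" using e q1 q2 dh by linarith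
  consider "q \<le> -1" | "q = 0" | "q = 1" | "q \<ge> 2" by linarith
  thus ?thesis
  proof cases
    case 1
    have "q * int I \<le> (-1) * int I" using 1 by (intro mult_right_mono) auto
    thus ?thesis using bd j' k' dI by linarith
  next
    case 2 thus ?thesis using bd j' k' by auto
  next
    case 3 thus ?thesis using bd j' k' dI by auto
  next
    case 4
    have "2 * int I \<le> q * int I" using 4 by (intro mult_right_mono) auto
    thus ?thesis using bd j' k' dI by linarith
  qed
qed



context
  fixes tau tau1 tau2 Tpr :: real and I d :: nat
  assumes dpos: "0 < d" and dev: "even d" and dI: "d + 1 \<le> I"
    and tp: "0 < tau" and tp1: "0 < tau1" and tp2: "0 < tau2" and tpr: "0 < Tpr"
begin

abbreviation "adj \<equiv> adjQ tau tau1 tau2 Tpr I d"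
abbreviation "Pat m \<equiv> {j \<in> {m..Msize I}. Lpat tau tau1 tau2 Tpr I d j m}"

lemma I0: "0 < I" using dI by simp

lemma adj_11: "p \<le> I \<Longrightarrow> q \<le> I \<Longrightarrow> \<not> adj p q"
  by (simp add: adjQ_def Qord_def theta1)

lemma adj_22: "I < p \<Longrightarrow> p \<le> 2*I \<Longrightarrow> I < q \<Longrightarrow> q \<le> 2*I \<Longrightarrow> \<not> adj p q"
  by (auto simp: adjQ_def Qord_def theta2)

lemma adj_12: "1 \<le> p \<Longrightarrow> p \<le> I \<Longrightarrow> I < q \<Longrightarrow> q \<le> 2*I \<Longrightarrow> adj p q \<longleftrightarrow> n12 I d p (q - I) = 1"
  using tp n12_01[of I d p "q - I"] by (auto simp: adjQ_def Qord_def theta1 theta2 Msize_def)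

lemma adj_21: "1 \<le> p \<Longrightarrow> p \<le> I \<Longrightarrow> I < q \<Longrightarrow> q \<le> 2*I \<Longrightarrow> adj q p \<longleftrightarrow> n12 I d p (q - I) = 1"
  using tp n12_01[of I d p "q - I"] by (auto simp: adjQ_def Qord_def theta1 theta2 Msize_def)

lemma col1:
  assumes m: "m \<in> {1..I}"
  shows "Pat m \<subseteq> {m} \<union> (\<lambda>k. I+k) ` {k\<in>{1..I}. n12 I d m k = 1} \<union> {2*I+1}"
proof
  fix j assume j: "j \<in> Pat m"
  show "j \<in> {m} \<union> (\<lambda>k. I+k) ` {k\<in>{1..I}. n12 I d m k = 1} \<union> {2*I+1}"
  proof (cases "j = m")
    case True thus ?thesis by simp
  next
    case False
    hence "path_via adj {1..<m} m j" using j by (simp add: Lpat_def)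
    then obtain n f where n: "0 < n" and f0: "f 0 = m" and fn: "f n = j"
      and a: "\<forall>i<n. adj (f i) (f (Suc i))" and s: "\<forall>i. 0 < i \<and> i < n \<longrightarrow> f i \<in> {1..<m}"
      using path_via_D by metis
    have aj: "adj m j"
    proof (cases "n = 1")
      case True thus ?thesis using a f0 fn by force
    next
      case False
      hence "f 1 \<in> {1..<m}" using s n by simp
      moreover have "adj m (f 1)" using a f0 n by force
      ultimately show ?thesis using adj_11 m by auto
    qed
    hence jr: "j \<in> {1..2*I+1}" by (simp add: adjQ_def Msize_def)
    show ?thesis
    proof (cases "j \<le> I")
      case True thus ?thesis using adj_11 aj m by auto
    next
      case jI: False
      show ?thesis
      proof (cases "j \<le> 2*I")
        case True
        hence "n12 I d m (j - I) = 1" using adj_12 aj m jI by auto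
        moreover have "j = I + (j - I)" using jI by simp
        moreover have "j - I \<in> {1..I}" using jI True by auto
        ultimately show ?thesis by blast
      next
        case False thus ?thesis using jr by auto
      qed
    qed
  qed
qed

lemma nLm1: "m \<in> {1..I} \<Longrightarrow> nLm tau tau1 tau2 Tpr I d m \<le> d + 3"
proof -
  assume m: "m \<in> {1..I}"
  have "nLm tau tau1 tau2 Tpr I d m \<le> card ({m} \<union> (\<lambda>k. I+k) ` {k\<in>{1..I}. n12 I d m k = 1} \<union> {2*I+1})"
    unfolding nLm_def by (rule card_mono[OF _ col1[OF m]]) simp
  also have "\<dots> \<le> card ({m} \<union> (\<lambda>k. I+k) ` {k\<in>{1..I}. n12 I d m k = 1}) + 1"
    using card_Un_le[of "{m} \<union> (\<lambda>k. I+k) ` {k\<in>{1..I}. n12 I d m k = 1}" "{2*I+1}"] by simp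
  also have "\<dots> \<le> 1 + card ((\<lambda>k. I+k) ` {k\<in>{1..I}. n12 I d m k = 1}) + 1"
    using card_Un_le[of "{m}" "(\<lambda>k. I+k) ` {k\<in>{1..I}. n12 I d m k = 1}"] by simp
  also have "\<dots> \<le> 1 + card {k\<in>{1..I}. n12 I d m k = 1} + 1"
    using card_image_le[of "{k\<in>{1..I}. n12 I d m k = 1}" "\<lambda>k. I+k"] by simp
  also have "\<dots> = d + 3" using deg_card[OF dI dev m] by simp
  finally show ?thesis .
qed

lemma col2:
  assumes k: "k \<in> {1..I}"
  shows "Pat (I+k) \<subseteq> {I+k, 2*I+1} \<union> (\<lambda>k'. I+k') ` ({k+1..k+d} \<union> {I+1-d..I})"
proof
  fix j assume j: "j \<in> Pat (I+k)"
  show "j \<in> {I+k, 2*I+1} \<union> (\<lambda>k'. I+k') ` ({k+1..k+d} \<union> {I+1-d..I})"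
  proof (cases "j = I+k \<or> j = 2*I+1")
    case True thus ?thesis by auto
  next
    case False
    hence jr: "I + k < j" "j \<le> 2*I" using j by (auto simp: Msize_def)
    have "path_via adj {1..<I+k} (I+k) j" using j False by (simp add: Lpat_def)
    then obtain n f where n: "0 < n" and f0: "f 0 = I+k" and fn: "f n = j"
      and a: "\<forall>i<n. adj (f i) (f (Suc i))" and s: "\<forall>i. 0 < i \<and> i < n \<longrightarrow> f i \<in> {1..<I+k}"
      using path_via_D by metis
    define Q where "Q p \<longleftrightarrow> (1 \<le> p \<and> p \<le> I \<and> (\<exists>j'\<in>{1..k}. n12 I d p j' = 1)) \<or> (I < p \<and> p \<le> I+k)" for p
    have inv: "t < n \<Longrightarrow> Q (f t)" for t
    proof (induction t)
      case 0 thus ?case using f0 k by (simp add: Q_def)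
    next
      case (Suc t)
      have Qt: "Q (f t)" using Suc by simp
      have at: "adj (f t) (f (Suc t))" using a Suc by simp
      have st: "f (Suc t) \<in> {1..<I+k}" using s Suc by simp
      show ?case
      proof (cases "f (Suc t) \<le> I")
        case True
        show ?thesis
        proof (cases "f t \<le> I")
          case True2: True
          thus ?thesis using adj_11 at True by blast
        next
          case False
          hence ft: "I < f t" "f t \<le> I + k" using Qt Q_def by auto
          hence "n12 I d (f (Suc t)) (f t - I) = 1" using adj_21[of "f (Suc t)" "f t"] at True st k by auto
          moreover have "f t - I \<in> {1..k}" using ft by auto
          ultimately show ?thesis using True st by (auto simp: Q_def)
        qed
      next
        case False thus ?thesis using st by (auto simp: Q_def)
      qed
    qed
    have Qe: "Q (f (n - 1))" using inv n by simp
    have ae: "adj (f (n-1)) j" using a n fn by (metis Suc_pred' diff_less zero_less_one)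
    have k': "j - I \<in> {k+1..k+d} \<union> {I+1-d..I}"
    proof (cases "f (n-1) \<le> I \<and> 1 \<le> f (n-1)")
      case True
      then obtain j' where j': "j' \<in> {1..k}" "n12 I d (f (n-1)) j' = 1" using Qe Q_def by auto
      have "n12 I d (f (n-1)) (j - I) = 1" using adj_12[of "f (n-1)" j] True ae jr by auto
      hence "j - I \<le> k + d \<or> I + 1 - d \<le> j - I"
        using geo[OF I0 _ dev, of j' k "j - I" "f (n-1)"] j' jr dI by auto
      thus ?thesis using jr by auto
    next
      case False
      hence "I < f (n-1) \<and> f (n-1) \<le> I + k" using Qe Q_def by auto
      hence False using adj_22[of "f (n-1)" j] ae jr k by auto
      thus ?thesis ..
    qed
    have "j = I + (j - I)" using jr by simp
    thus ?thesis using k' by blast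
  qed
qed

lemma nLm2: "k \<in> {1..I} \<Longrightarrow> nLm tau tau1 tau2 Tpr I d (I+k) \<le> 2*d + 2"
proof -
  assume k: "k \<in> {1..I}"
  let ?U = "{k+1..k+d} \<union> {I+1-d..I}"
  have "nLm tau tau1 tau2 Tpr I d (I+k) \<le> card ({I+k, 2*I+1} \<union> (\<lambda>k'. I+k') ` ?U)"
    unfolding nLm_def by (rule card_mono[OF _ col2[OF k]]) simp
  also have "\<dots> \<le> card {I+k, 2*I+1} + card ((\<lambda>k'. I+k') ` ?U)" by (rule card_Un_le)
  also have "\<dots> \<le> 2 + card ?U"
    using card_image_le[of ?U "\<lambda>k'. I+k'"] card_insert_le_m1[of 2 "{2*I+1}" "I+k"] by (simp add: card_insert_if)
  also have "\<dots> \<le> 2 + (d + d)"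
    using card_Un_le[of "{k+1..k+d}" "{I+1-d..I}"] dI by simp
  finally show ?thesis by simp
qed

lemma nLm3: "nLm tau tau1 tau2 Tpr I d (2*I+1) \<le> 1"
proof -
  have "{j \<in> {2*I+1..Msize I}. Lpat tau tau1 tau2 Tpr I d j (2*I+1)} \<subseteq> {2*I+1}"
    by (auto simp: Msize_def)
  hence "nLm tau tau1 tau2 Tpr I d (2*I+1) \<le> card {2*I+1}" unfolding nLm_def by (intro card_mono) auto
  thus ?thesis by simp
qed

lemma nLm_all: "m \<in> {1..2*I+1} \<Longrightarrow> nLm tau tau1 tau2 Tpr I d m \<le> 2*d + 3"
proof -
  assume m: "m \<in> {1..2*I+1}"
  consider "m \<le> I" | "I < m \<and> m \<le> 2*I" | "m = 2*I+1" using m by force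
  thus ?thesis
  proof cases
    case 1 thus ?thesis using nLm1[of m] m by auto
  next
    case 2
    hence "m - I \<in> {1..I}" "I + (m - I) = m" by auto
    hence "nLm tau tau1 tau2 Tpr I d m \<le> 2*d+2" using nLm2[of "m - I"] by metis
    thus ?thesis by simp
  next
    case 3 thus ?thesis using nLm3 by simp
  qed
qed

lemma nL_le: "nL tau tau1 tau2 Tpr I d \<le> I * (d+3) + I * (2*d+2) + 1"
proof -
  have "nL tau tau1 tau2 Tpr I d = (\<Sum>m\<in>{1..I}. nLm tau tau1 tau2 Tpr I d m)
     + (\<Sum>k\<in>{1..I}. nLm tau tau1 tau2 Tpr I d (I+k)) + nLm tau tau1 tau2 Tpr I d (2*I+1)"
    unfolding nL_def Msize_def by (rule sum_split3)
  also have "\<dots> \<le> I * (d+3) + I * (2*d+2) + 1"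
  proof (intro add_mono)
    show "(\<Sum>m\<in>{1..I}. nLm tau tau1 tau2 Tpr I d m) \<le> I * (d+3)"
      using sum_bounded_above[of "{1..I}" "nLm tau tau1 tau2 Tpr I d" "d+3"] nLm1 by simp
    show "(\<Sum>k\<in>{1..I}. nLm tau tau1 tau2 Tpr I d (I+k)) \<le> I * (2*d+2)"
      using sum_bounded_above[of "{1..I}" "\<lambda>k. nLm tau tau1 tau2 Tpr I d (I+k)" "2*d+2"] nLm2 by simp
  qed (rule nLm3)
  finally show ?thesis .
qed

lemma col_Q1:
  assumes m: "m \<in> {1..I}"
  shows "d + 2 \<le> card {j \<in> {m..Msize I}. Qord tau tau1 tau2 Tpr I d j m \<noteq> 0}"
proof -
  let ?K = "{k\<in>{1..I}. n12 I d m k = 1}"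
  have sub: "{m} \<union> (\<lambda>k. I+k) ` ?K \<subseteq> {j \<in> {m..Msize I}. Qord tau tau1 tau2 Tpr I d j m \<noteq> 0}"
  proof
    fix j assume "j \<in> {m} \<union> (\<lambda>k. I+k) ` ?K"
    then consider "j = m" | k where "k \<in> ?K" "j = I + k" by blast
    thus "j \<in> {j \<in> {m..Msize I}. Qord tau tau1 tau2 Tpr I d j m \<noteq> 0}"
    proof cases
      case 1
      have "0 \<le> real (n1 I d m) * tau" using tp by simp
      thus ?thesis using 1 m tp1 by (auto simp: Qord_def theta1 Msize_def)
    next
      case 2
      thus ?thesis using m tp by (auto simp: Qord_def theta1 theta2 Msize_def)
    qed
  qed
  have "card ({m} \<union> (\<lambda>k. I+k) ` ?K) = 1 + card ((\<lambda>k. I+k) ` ?K)"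
    using m by (subst card_Un_disjoint) auto
  also have "\<dots> = 1 + card ?K" by (subst card_image) (auto simp: inj_on_def)
  also have "\<dots> = d + 2" using deg_card[OF dI dev m] by simp
  finally show ?thesis using card_mono[OF _ sub] by simp
qed

lemma col_Q2:
  assumes m: "m \<in> {I+1..2*I+1}"
  shows "1 \<le> card {j \<in> {m..Msize I}. Qord tau tau1 tau2 Tpr I d j m \<noteq> 0}"
proof -
  have "Qord tau tau1 tau2 Tpr I d m m \<noteq> 0"
  proof (cases "m \<le> 2*I")
    case True
    have "0 \<le> real (n2 I d (m - I)) * tau" using tp by simp
    thus ?thesis using True m tp2 by (auto simp: Qord_def theta2)
  next
    case False
    hence "m = 2*I+1" using m by simp
    moreover have "0 \<le> real (Nobs I d) * tau" using tp by simp
    ultimately show ?thesis using tpr thetaM[of I] by (simp add: Qord_def del: One_nat_def)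
  qed
  hence "m \<in> {j \<in> {m..Msize I}. Qord tau tau1 tau2 Tpr I d j m \<noteq> 0}" using m by (auto simp: Msize_def)
  hence "{j \<in> {m..Msize I}. Qord tau tau1 tau2 Tpr I d j m \<noteq> 0} \<noteq> {}" by blast
  thus ?thesis by (simp add: Suc_le_eq card_gt_0_iff)
qed

lemma nQ_ge: "I * (d+3) + 1 \<le> nQ tau tau1 tau2 Tpr I d"
proof -
  let ?c = "\<lambda>m. card {j \<in> {m..Msize I}. Qord tau tau1 tau2 Tpr I d j m \<noteq> 0}"
  have "nQ tau tau1 tau2 Tpr I d = (\<Sum>m\<in>{1..Msize I}. ?c m)"
    unfolding nQ_def by (rule card_pairs) auto
  also have "\<dots> = (\<Sum>m\<in>{1..I}. ?c m) + (\<Sum>k\<in>{1..I}. ?c (I+k)) + ?c (2*I+1)"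
    unfolding Msize_def by (rule sum_split3)
  also have "\<dots> \<ge> I * (d+2) + I * 1 + 1"
  proof (intro add_mono)
    show "I * (d+2) \<le> (\<Sum>m\<in>{1..I}. ?c m)"
      using sum_bounded_below[of "{1..I}" "d+2" ?c] col_Q1 by simp
    show "I * 1 \<le> (\<Sum>k\<in>{1..I}. ?c (I+k))"
      using sum_bounded_below[of "{1..I}" 1 "\<lambda>k. ?c (I+k)"] col_Q2 by simp
    show "1 \<le> ?c (2*I+1)" using col_Q2 by simp
  qed
  finally show ?thesis by (simp add: algebra_simps)
qed

lemma ratio: "real (nL tau tau1 tau2 Tpr I d) / real (nQ tau tau1 tau2 Tpr I d) \<le> 3"
proof -
  have a: "nL tau tau1 tau2 Tpr I d \<le> 3 * nQ tau tau1 tau2 Tpr I d"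
    using nL_le nQ_ge by (simp add: algebra_simps)
  have "0 < nQ tau tau1 tau2 Tpr I d" using nQ_ge by simp
  thus ?thesis using a by (simp add: divide_le_eq)
qed

lemma sum_2p1: "(\<Sum>m\<in>A. 2 * f m + (1::nat)) = 2 * sum f A + card A"
  unfolding sum.distrib by (simp add: sum_distrib_left)

lemma sum_ind: "finite A \<Longrightarrow> (\<Sum>x\<in>A. if P x then 1 else 0) = (card {x\<in>A. P x} :: nat)"
  by (simp add: sum.If_cases Int_def)

lemma dc: "(\<Sum>m\<in>{1..M::nat}. card {l\<in>{1..<m}. P m l}) \<le> (\<Sum>l\<in>{1..M}. card {m\<in>{l..M}. P m l})"
proof -
  have "(\<Sum>m\<in>{1..M}. card {l\<in>{1..<m}. P m l}) = (\<Sum>m\<in>{1..M}. \<Sum>l\<in>{1..M}. if l < m \<and> P m l then 1 else 0)"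
  proof (rule sum.cong[OF refl])
    fix m assume m: "m \<in> {1..M}"
    have "{l\<in>{1..<m}. P m l} = {l\<in>{1..M}. l < m \<and> P m l}" using m by auto
    thus "card {l\<in>{1..<m}. P m l} = (\<Sum>l\<in>{1..M}. if l < m \<and> P m l then 1 else 0)"
      by (simp add: sum_ind)
  qed
  also have "\<dots> = (\<Sum>l\<in>{1..M}. \<Sum>m\<in>{1..M}. if l < m \<and> P m l then 1 else 0)" by (rule sum.swap)
  also have "\<dots> \<le> (\<Sum>l\<in>{1..M}. card {m\<in>{l..M}. P m l})"
  proof (rule sum_mono)
    fix l assume "l \<in> {1..M}"
    have "(\<Sum>m\<in>{1..M}. if l < m \<and> P m l then 1 else 0) = card {m\<in>{1..M}. l < m \<and> P m l}"
      by (simp add: sum_ind)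
    also have "\<dots> \<le> card {m\<in>{l..M}. P m l}" by (rule card_mono) auto
    finally show "(\<Sum>m\<in>{1..M}. if l < m \<and> P m l then 1 else 0) \<le> card {m\<in>{l..M}. P m l}" .
  qed
  finally show ?thesis .
qed

lemma cost_le: "CostSLA tau tau1 tau2 Tpr I d \<le> (2*d+3) * (2 * nL tau tau1 tau2 Tpr I d + (2*I+1))"
proof -
  let ?L = "Lpat tau tau1 tau2 Tpr I d"
  let ?r = "\<lambda>m. card {l\<in>{1..<m}. ?L m l}"
  have "CostSLA tau tau1 tau2 Tpr I d \<le> (\<Sum>m\<in>{1..Msize I}. (2*d+3) * (2 * ?r m + 1))"
    unfolding CostSLA_def
  proof (rule sum_mono)
    fix m assume m: "m \<in> {1..Msize I}"
    have "(\<Sum>j\<in>Pat m. 2 * card {l\<in>{1..<m}. ?L j l \<and> ?L m l} + 1) \<le> (\<Sum>j\<in>Pat m. 2 * ?r m + 1)"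
    proof (rule sum_mono)
      fix j
      have "card {l\<in>{1..<m}. ?L j l \<and> ?L m l} \<le> ?r m" by (rule card_mono) auto
      thus "2 * card {l\<in>{1..<m}. ?L j l \<and> ?L m l} + 1 \<le> 2 * ?r m + 1" by simp
    qed
    also have "\<dots> = nLm tau tau1 tau2 Tpr I d m * (2 * ?r m + 1)" by (simp add: nLm_def)
    also have "\<dots> \<le> (2*d+3) * (2 * ?r m + 1)"
      using nLm_all[of m] m by (intro mult_right_mono) (auto simp: Msize_def)
    finally show "(\<Sum>j\<in>Pat m. 2 * card {l\<in>{1..<m}. ?L j l \<and> ?L m l} + 1) \<le> (2*d+3) * (2 * ?r m + 1)" .
  qed
  also have "\<dots> = (2*d+3) * (2 * (\<Sum>m\<in>{1..Msize I}. ?r m) + (2*I+1))"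
  proof -
    have "(\<Sum>m\<in>{1..Msize I}. (2*d+3) * (2 * ?r m + 1)) = (2*d+3) * (\<Sum>m\<in>{1..Msize I}. 2 * ?r m + 1)"
      by (rule sum_distrib_left[symmetric])
    also have "(\<Sum>m\<in>{1..Msize I}. 2 * ?r m + 1) = 2 * (\<Sum>m\<in>{1..Msize I}. ?r m) + (2*I+1)"
      unfolding sum_2p1 by (simp add: Msize_def)
    finally show ?thesis .
  qed
  also have "\<dots> \<le> (2*d+3) * (2 * nL tau tau1 tau2 Tpr I d + (2*I+1))"
  proof -
    have "(\<Sum>m\<in>{1..Msize I}. ?r m) \<le> nL tau tau1 tau2 Tpr I d"
      unfolding nL_def nLm_def by (rule dc)
    thus ?thesis by simp
  qed
  finally show ?thesis .
qed

definition "common k k' = (\<Sum>i\<in>{1..I}. n12 I d i k * n12 I d i k')"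

lemma common_card: "common k k' = card {i\<in>{1..I}. n12 I d i k = 1 \<and> n12 I d i k' = 1}"
proof -
  have "common k k' = (\<Sum>i\<in>{1..I}. if n12 I d i k = 1 \<and> n12 I d i k' = 1 then 1 else 0)"
    unfolding common_def
  proof (rule sum.cong[OF refl])
    fix i show "n12 I d i k * n12 I d i k' = (if n12 I d i k = 1 \<and> n12 I d i k' = 1 then 1 else 0)"
      using n12_01[of I d i k] n12_01[of I d i k'] by auto
  qed
  thus ?thesis by (simp add: sum_ind)
qed

lemma Lpat_12: "i \<in> {1..I} \<Longrightarrow> k' \<in> {1..I} \<Longrightarrow> n12 I d i k' = 1 \<Longrightarrow> Lpat tau tau1 tau2 Tpr I d (I+k') i"
  unfolding Lpat_def using adj_12[of i "I+k'"] by (auto simp: Msize_def intro!: path2)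

lemma cc_ge:
  assumes k: "k \<in> {1..I}" and k': "k' \<in> {k+1..I}"
  shows "common k k' \<le> card {l\<in>{1..<I+k}. Lpat tau tau1 tau2 Tpr I d (I+k') l \<and> Lpat tau tau1 tau2 Tpr I d (I+k) l}"
  unfolding common_card
proof (rule card_mono)
  show "{i \<in> {1..I}. n12 I d i k = 1 \<and> n12 I d i k' = 1}
    \<subseteq> {l \<in> {1..<I + k}. Lpat tau tau1 tau2 Tpr I d (I + k') l \<and> Lpat tau tau1 tau2 Tpr I d (I + k) l}"
    using k k' Lpat_12 by auto
qed simp

lemma pat_common:
  assumes k: "k \<in> {1..I}" and k': "k' \<in> {k+1..I}" and c: "0 < common k k'"
  shows "I + k' \<in> Pat (I+k)"
proof -
  obtain i where i: "i \<in> {1..I}" "n12 I d i k = 1" "n12 I d i k' = 1"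
  proof -
    have "{i\<in>{1..I}. n12 I d i k = 1 \<and> n12 I d i k' = 1} \<noteq> {}"
      using c unfolding common_card by (metis card.empty less_irrefl)
    thus ?thesis using that by blast
  qed
  have "adj (I+k) i" using adj_21[of i "I+k"] i k by auto
  moreover have "adj i (I+k')" using adj_12[of i "I+k'"] i k' by auto
  ultimately have "path_via adj {1..<I+k} (I+k) (I+k')" using i k by (intro path3) auto
  thus ?thesis using k k' by (auto simp: Lpat_def Msize_def)
qed

lemma col_lower:
  assumes k: "k \<in> {1..I}"
  shows "(\<Sum>k'\<in>{k+1..I}. 2 * common k k') \<le>
    (\<Sum>j\<in>Pat (I+k). 2 * card {l\<in>{1..<I+k}. Lpat tau tau1 tau2 Tpr I d j l \<and> Lpat tau tau1 tau2 Tpr I d (I+k) l} + 1)"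
proof -
  let ?g = "\<lambda>k'. 2 * common k k'"
  let ?T = "{k+1+I..I+I} \<inter> Pat (I+k)"
  have "(\<Sum>k'\<in>{k+1..I}. ?g k') = (\<Sum>j\<in>{k+1+I..I+I}. ?g (j - I))"
    using sum.shift_bounds_cl_nat_ivl[of "\<lambda>j. ?g (j - I)" "k+1" I I] by simp
  also have "\<dots> = (\<Sum>j\<in>?T. ?g (j - I))"
  proof (rule sum.mono_neutral_right)
    show "\<forall>j\<in>{k+1+I..I+I} - ?T. ?g (j - I) = 0"
    proof
      fix j assume j: "j \<in> {k+1+I..I+I} - ?T"
      show "?g (j - I) = 0"
      proof (rule ccontr)
        assume "?g (j - I) \<noteq> 0"
        hence "I + (j - I) \<in> Pat (I+k)" using j k by (intro pat_common) auto
        thus False using j by auto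
      qed
    qed
  qed auto
  also have "\<dots> \<le> (\<Sum>j\<in>?T. 2 * card {l\<in>{1..<I+k}. Lpat tau tau1 tau2 Tpr I d j l \<and> Lpat tau tau1 tau2 Tpr I d (I+k) l} + 1)"
  proof (rule sum_mono)
    fix j assume j: "j \<in> ?T"
    have "common k (j - I) \<le> card {l\<in>{1..<I+k}. Lpat tau tau1 tau2 Tpr I d (I + (j - I)) l \<and> Lpat tau tau1 tau2 Tpr I d (I+k) l}"
      using j k by (intro cc_ge) auto
    moreover have "I + (j - I) = j" using j by auto
    ultimately show "?g (j - I) \<le> 2 * card {l\<in>{1..<I+k}. Lpat tau tau1 tau2 Tpr I d j l \<and> Lpat tau tau1 tau2 Tpr I d (I+k) l} + 1"
      by simp
  qed
  also have "\<dots> \<le> (\<Sum>j\<in>Pat (I+k). 2 * card {l\<in>{1..<I+k}. Lpat tau tau1 tau2 Tpr I d j l \<and> Lpat tau tau1 tau2 Tpr I d (I+k) l} + 1)"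
    by (rule sum_mono2) auto
  finally show ?thesis .
qed

lemma sym_sum:
  fixes F :: "nat \<Rightarrow> nat \<Rightarrow> nat"
  assumes sym: "\<And>a b. F a b = F b a"
  shows "(\<Sum>k\<in>{1..n}. \<Sum>k'\<in>{1..n}. F k k') = 2 * (\<Sum>k\<in>{1..n}. \<Sum>k'\<in>{k+1..n}. F k k') + (\<Sum>k\<in>{1..n}. F k k)"
proof -
  let ?A = "\<lambda>k k'. if k < k' then F k k' else 0"
  let ?B = "\<lambda>k k'. if k' < k then F k k' else 0"
  let ?C = "\<lambda>k k'. if k' = k then F k k' else 0"
  have pw: "F k k' = ?A k k' + ?B k k' + ?C k k'" for k k' by auto
  have "(\<Sum>k\<in>{1..n}. \<Sum>k'\<in>{1..n}. F k k') =
     (\<Sum>k\<in>{1..n}. \<Sum>k'\<in>{1..n}. ?A k k') + (\<Sum>k\<in>{1..n}. \<Sum>k'\<in>{1..n}. ?B k k') + (\<Sum>k\<in>{1..n}. \<Sum>k'\<in>{1..n}. ?C k k')"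
    by (subst pw) (simp add: sum.distrib)
  moreover have "(\<Sum>k\<in>{1..n}. \<Sum>k'\<in>{1..n}. ?B k k') = (\<Sum>k\<in>{1..n}. \<Sum>k'\<in>{1..n}. ?A k k')"
  proof -
    have "(\<Sum>k\<in>{1..n}. \<Sum>k'\<in>{1..n}. ?B k k') = (\<Sum>k'\<in>{1..n}. \<Sum>k\<in>{1..n}. ?B k k')" by (rule sum.swap)
    also have "\<dots> = (\<Sum>k\<in>{1..n}. \<Sum>k'\<in>{1..n}. ?A k k')"
      by (intro sum.cong refl) (metis sym)
    finally show ?thesis .
  qed
  moreover have "(\<Sum>k'\<in>{1..n}. ?A k k') = (\<Sum>k'\<in>{k+1..n}. F k k')" for k
  proof -
    have "(\<Sum>k'\<in>{1..n}. ?A k k') = sum (F k) {k'\<in>{1..n}. k < k'}"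
      by (rule sum.inter_filter[symmetric]) simp
    also have "{k'\<in>{1..n}. k < k'} = {k+1..n}" by auto
    finally show ?thesis .
  qed
  moreover have "(\<Sum>k'\<in>{1..n}. ?C k k') = (if k \<in> {1..n} then F k k else 0)" for k
    by (rule sum.delta) simp
  ultimately show ?thesis by simp
qed

lemma total_common: "(\<Sum>k\<in>{1..I}. \<Sum>k'\<in>{1..I}. common k k') = I * (d+1) * (d+1)"
proof -
  have "(\<Sum>k\<in>{1..I}. \<Sum>k'\<in>{1..I}. common k k') = (\<Sum>k\<in>{1..I}. \<Sum>i\<in>{1..I}. \<Sum>k'\<in>{1..I}. n12 I d i k * n12 I d i k')"
    unfolding common_def by (subst sum.swap) simp
  also have "\<dots> = (\<Sum>i\<in>{1..I}. \<Sum>k\<in>{1..I}. \<Sum>k'\<in>{1..I}. n12 I d i k * n12 I d i k')" by (rule sum.swap)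
  also have "\<dots> = (\<Sum>i\<in>{1..I}. n1 I d i * n1 I d i)" unfolding n1_def by (simp add: sum_product)
  also have "\<dots> = (\<Sum>i\<in>{1..I}. (d+1) * (d+1))" using n1_val[OF dI dev] by simp
  also have "\<dots> = I * (d+1) * (d+1)" by (simp add: algebra_simps)
  finally show ?thesis .
qed

lemma diag_common: "(\<Sum>k\<in>{1..I}. common k k) = I * (d+1)"
proof -
  have "(\<Sum>k\<in>{1..I}. common k k) = (\<Sum>k\<in>{1..I}. n2 I d k)"
    unfolding common_def n2_def
  proof (intro sum.cong refl)
    fix k i show "n12 I d i k * n12 I d i k = n12 I d i k" using n12_01[of I d i k] by auto
  qed
  also have "\<dots> = (\<Sum>k\<in>{1..I}. d+1)" using n2_val[OF dI dev] by simp
  finally show ?thesis by simp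
qed

lemma cost_ge: "I * d * (d+1) \<le> CostSLA tau tau1 tau2 Tpr I d"
proof -
  let ?h = "\<lambda>m. (\<Sum>j\<in>Pat m. 2 * card {l\<in>{1..<m}. Lpat tau tau1 tau2 Tpr I d j l \<and> Lpat tau tau1 tau2 Tpr I d m l} + 1)"
  have csym: "common a b = common b a" for a b unfolding common_def by (simp add: mult.commute)
  have "I * (d+1) * (d+1) = 2 * (\<Sum>k\<in>{1..I}. \<Sum>k'\<in>{k+1..I}. common k k') + I * (d+1)"
    using sym_sum[of common I, OF csym] unfolding total_common diag_common .
  moreover have "I * (d+1) * (d+1) = I * d * (d+1) + I * (d+1)" by (simp add: algebra_simps)
  ultimately have e: "2 * (\<Sum>k\<in>{1..I}. \<Sum>k'\<in>{k+1..I}. common k k') = I * d * (d+1)"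
    by linarith
  have "2 * (\<Sum>k\<in>{1..I}. \<Sum>k'\<in>{k+1..I}. common k k') = (\<Sum>k\<in>{1..I}. \<Sum>k'\<in>{k+1..I}. 2 * common k k')"
    by (simp add: sum_distrib_left)
  also have "\<dots> \<le> (\<Sum>k\<in>{1..I}. ?h (I+k))" by (rule sum_mono) (rule col_lower)
  also have "\<dots> \<le> sum ?h {1..I} + (\<Sum>k\<in>{1..I}. ?h (I+k)) + ?h (2*I+1)" by simp
  also have "\<dots> = CostSLA tau tau1 tau2 Tpr I d"
    unfolding CostSLA_def Msize_def by (rule sum_split3[symmetric])
  finally show ?thesis using e by simp
qed

lemma cost_le2: "CostSLA tau tau1 tau2 Tpr I d \<le> 39 * (I * (d+1) * (d+1))"
proof -
  have a: "2 * nL tau tau1 tau2 Tpr I d + (2*I+1) \<le> I * (6*d+15)"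
  proof -
    have "2 * nL tau tau1 tau2 Tpr I d + (2*I+1) \<le> 2 * (I * (d+3) + I * (2*d+2) + 1) + (2*I+1)"
      using nL_le by simp
    also have "\<dots> = I * (6*d+12) + 3" by (simp add: algebra_simps)
    also have "\<dots> \<le> I * (6*d+12) + 3 * I" using I0 by simp
    also have "\<dots> = I * (6*d+15)" by (simp add: algebra_simps)
    finally show ?thesis .
  qed
  have "CostSLA tau tau1 tau2 Tpr I d \<le> (2*d+3) * (I * (6*d+15))"
    using cost_le a by (meson le_trans mult_le_mono2)
  also have "\<dots> \<le> (3*(d+1)) * (I * (13*(d+1)))"
    using dpos by (intro mult_mono) auto
  also have "\<dots> = 39 * (I * (d+1) * (d+1))" by (simp add: algebra_simps)
  finally show ?thesis .
qed

lemma final2: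
  "1/2 \<le> real (CostSLA tau tau1 tau2 Tpr I d) / (real (Nobs I d) * nbar I d) \<and>
   real (CostSLA tau tau1 tau2 Tpr I d) / (real (Nobs I d) * nbar I d) \<le> 40"
proof -
  have X: "real (Nobs I d) * nbar I d = real (I * (d+1) * (d+1))"
    using Nobs_val[OF dI dev] nbar_val[OF dI dev] by (simp add: algebra_simps)
  have Xp: "0 < real (I * (d+1) * (d+1))" unfolding of_nat_0_less_iff using I0 by simp
  have lo: "real (I * (d+1) * (d+1)) \<le> 2 * real (CostSLA tau tau1 tau2 Tpr I d)"
  proof -
    have "I * (d+1) * (d+1) \<le> 2 * (I * d * (d+1))"
    proof -
      have "d + 1 \<le> 2 * d" using dpos by simp
      hence "I * (d+1) * (d+1) \<le> I * (2 * d) * (d+1)" by (intro mult_right_mono mult_left_mono) auto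
      thus ?thesis by (simp add: algebra_simps)
    qed
    also have "\<dots> \<le> 2 * CostSLA tau tau1 tau2 Tpr I d" using cost_ge by simp
    finally have "real (I * (d+1) * (d+1)) \<le> real (2 * CostSLA tau tau1 tau2 Tpr I d)"
      by (simp only: of_nat_le_iff)
    thus ?thesis by simp
  qed
  have hi: "real (CostSLA tau tau1 tau2 Tpr I d) \<le> 40 * real (I * (d+1) * (d+1))"
  proof -
    have "CostSLA tau tau1 tau2 Tpr I d \<le> 40 * (I * (d+1) * (d+1))" using cost_le2 by simp
    hence "real (CostSLA tau tau1 tau2 Tpr I d) \<le> real (40 * (I * (d+1) * (d+1)))"
      by (simp only: of_nat_le_iff)
    thus ?thesis by simp
  qed
  show ?thesis unfolding X using lo hi Xp by (simp add: divide_le_eq le_divide_eq)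
qed

end


theorem proposition4:
  shows "(\<forall>I d tau tau1 tau2 Tpr.
            0 < d \<and> even d \<and> d + 1 \<le> I \<and> 0 < tau \<and> 0 < tau1 \<and> 0 < tau2 \<and> 0 < Tpr \<longrightarrow>
            real (nL tau tau1 tau2 Tpr I d) / real (nQ tau tau1 tau2 Tpr I d) \<le> 3)
       \<and> (\<exists>c1 c2. 0 < c1 \<and> 0 < c2 \<and>
            (\<forall>I d tau tau1 tau2 Tpr.
               0 < d \<and> even d \<and> d + 1 \<le> I \<and> 0 < tau \<and> 0 < tau1 \<and> 0 < tau2 \<and> 0 < Tpr \<longrightarrow>
               c1 \<le> real (CostSLA tau tau1 tau2 Tpr I d) / (real (Nobs I d) * nbar I d) \<and>
               real (CostSLA tau tau1 tau2 Tpr I d) / (real (Nobs I d) * nbar I d) \<le> c2))"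
proof
  show "\<forall>I d tau tau1 tau2 Tpr.
            0 < d \<and> even d \<and> d + 1 \<le> I \<and> 0 < tau \<and> 0 < tau1 \<and> 0 < tau2 \<and> 0 < Tpr \<longrightarrow>
            real (nL tau tau1 tau2 Tpr I d) / real (nQ tau tau1 tau2 Tpr I d) \<le> 3"
    using ratio by blast
  show "\<exists>c1 c2. 0 < c1 \<and> 0 < c2 \<and>
            (\<forall>I d tau tau1 tau2 Tpr.
               0 < d \<and> even d \<and> d + 1 \<le> I \<and> 0 < tau \<and> 0 < tau1 \<and> 0 < tau2 \<and> 0 < Tpr \<longrightarrow>
               c1 \<le> real (CostSLA tau tau1 tau2 Tpr I d) / (real (Nobs I d) * nbar I d) \<and>
               real (CostSLA tau tau1 tau2 Tpr I d) / (real (Nobs I d) * nbar I d) \<le> c2)"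
    by (rule exI[of _ "1/2"], rule exI[of _ 40]) (use final2 in auto)
qed

end
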